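(* Let $\mathcal{H}$ be a complex linear space with a non-degenerate indefinite inner product $[\cdot,\cdot]$, and let $\mathcal{F}_{++}=\{f\in\mathcal{H}:[f,f]>0\}$. Let $W$ be a linear operator defined on $\mathcal{F}_{++}$ which maps $\mathcal{F}_{++}$ onto $\mathcal{F}_{++}$ in a one-to-one manner. Then the (unique) linear extension of $W$ to $\mathcal{H}$ is a bijection of $\mathcal{H}$ onto itself, and $$[Wf,Wg]=\theta[f,g]\quad\text{for all } f,g\in\mathcal{H},\qquad\text{where}\quad \theta=\inf_{f\in\mathcal{F}_{++}}\frac{[Wf,Wf]}{[f,f]}>0.$$
   Context: An indefinite inner product on a complex linear space $\mathcal{H}$ is a Hermitian sesquilinear form $[\cdot,\cdot]$ (linear in the second argument) for which there exist vectors $f,g$ with $[f,f]>0$ and $[g,g]<0$; it is non-degenerate if $[f,g]=0$ for all $g$ implies $f=0$. An operator $W:\mathcal{F}_{++}\to\mathcal{H}$ is linear (on $\mathcal{F}_{++}$) if $W(cf)=cWf$ for $f\in\mathcal{F}_{++}$, nonzero $c\in\mathbb{C}$, and $W(f+g)=Wf+Wg$ whenever $f,g,f+g\in\mathcal{F}_{++}$. Such a $W$ extends uniquely to a linear operator on all of $\mathcal{H}$ (every vector is a sum of two positive vectors). *)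

theory Defs
  imports Complex_Main
begin

text \<open>The complex linear space H is modelled by a type 'a with an abstract complex
scalar multiplication sc satisfying the vector space axioms (locale vector_space).
B f g is the inner product [f,g], linear in the second argument.\<close>

definition hermitian_sesq ::
  "(complex \<Rightarrow> 'a::ab_group_add \<Rightarrow> 'a) \<Rightarrow> ('a \<Rightarrow> 'a \<Rightarrow> complex) \<Rightarrow> bool" where
  "hermitian_sesq sc B \<longleftrightarrow>
     (\<forall>f g h. B f (g + h) = B f g + B f h) \<and>
     (\<forall>f g c. B f (sc c g) = c * B f g) \<and>
     (\<forall>f g. B g f = cnj (B f g))"

definition indefinite :: "('a \<Rightarrow> 'a \<Rightarrow> complex) \<Rightarrow> bool" where
  "indefinite B \<longleftrightarrow> (\<exists>f g. Re (B f f) > 0 \<and> Re (B g g) < 0)"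

definition nondegenerate :: "('a::zero \<Rightarrow> 'a \<Rightarrow> complex) \<Rightarrow> bool" where
  "nondegenerate B \<longleftrightarrow> (\<forall>f. (\<forall>g. B f g = 0) \<longrightarrow> f = 0)"

text \<open>The positive cone F++ = {f. [f,f] > 0} (B f f is real for Hermitian B).\<close>
definition Fpp :: "('a \<Rightarrow> 'a \<Rightarrow> complex) \<Rightarrow> 'a set" where
  "Fpp B = {f. Re (B f f) > 0}"

definition linear_on ::
  "(complex \<Rightarrow> 'a::ab_group_add \<Rightarrow> 'a) \<Rightarrow> 'a set \<Rightarrow> ('a \<Rightarrow> 'a) \<Rightarrow> bool" where
  "linear_on sc S W \<longleftrightarrow>
     (\<forall>f\<in>S. \<forall>c. c \<noteq> 0 \<longrightarrow> W (sc c f) = sc c (W f)) \<and>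
     (\<forall>f g. f \<in> S \<and> g \<in> S \<and> f + g \<in> S \<longrightarrow> W (f + g) = W f + W g)"

end

theory Submission
  imports Defs
begin


locale hsp = vector_space sc for sc :: "complex \<Rightarrow> 'a::ab_group_add \<Rightarrow> 'a" +
  fixes B :: "'a \<Rightarrow> 'a \<Rightarrow> complex"
  assumes herm: "hermitian_sesq sc B"
begin

abbreviation Q where "Q x \<equiv> Re (B x x)"

lemma Br_add: "B f (g + h) = B f g + B f h" using herm unfolding hermitian_sesq_def by blast
lemma Br_sc: "B f (sc c g) = c * B f g" using herm unfolding hermitian_sesq_def by blast
lemma B_cnj: "B g f = cnj (B f g)" using herm unfolding hermitian_sesq_def by blast
lemma Bl_add: "B (f + g) h = B f h + B g h"
proof -
  have "B (f + g) h = cnj (B h (f + g))" by (rule B_cnj)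
  also have "\<dots> = cnj (B h f) + cnj (B h g)" by (simp only: Br_add complex_cnj_add)
  also have "\<dots> = B f h + B g h" by (simp only: B_cnj[of h f] B_cnj[of h g] complex_cnj_cnj)
  finally show ?thesis .
qed
lemma Bl_sc: "B (sc c f) g = cnj c * B f g"
proof -
  have "B (sc c f) g = cnj (B g (sc c f))" by (rule B_cnj)
  also have "\<dots> = cnj c * cnj (B g f)" by (simp only: Br_sc complex_cnj_mult)
  also have "\<dots> = cnj c * B f g" by (simp only: B_cnj[of g f] complex_cnj_cnj)
  finally show ?thesis .
qed
lemma Br_diff: "B f (g - h) = B f g - B f h"
  using Br_add[of f "g - h" h] by simp
lemma Bl_diff: "B (f - g) h = B f h - B g h"
  using Bl_add[of "f - g" g h] by simp
lemma Re_sym: "Re (B g f) = Re (B f g)"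
proof -
  have "B g f = cnj (B f g)" by (rule B_cnj)
  thus ?thesis by simp
qed

lemma Q_add: "Q (x + y) = Q x + 2 * Re (B x y) + Q y"
  using Re_sym[of x y] by (simp add: Bl_add Br_add)

lemma Q_sc: "Q (sc c x) = (cmod c)^2 * Q x"
proof -
  have "B (sc c x) (sc c x) = (cnj c * c) * B x x" by (simp add: Bl_sc Br_sc)
  also have "cnj c * c = of_real ((cmod c)^2)"
    by (subst mult.commute) (rule complex_norm_square[symmetric])
  finally show ?thesis by simp
qed

lemma Q_scr: "Q (sc (of_real t) x) = t^2 * Q x"
proof -
  have "Q (sc (of_real t) x) = (cmod (of_real t))^2 * Q x" by (rule Q_sc)
  also have "(cmod (of_real t))^2 = t^2" by simp
  finally show ?thesis .
qed

lemma Re_scr: "Re (B x (sc (of_real t) y)) = t * Re (B x y)"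
  by (simp add: Br_sc)

lemma Q_lin: "Q (x + sc (of_real t) y) = Q x + 2 * t * Re (B x y) + t^2 * Q y"
proof -
  have "Q (x + sc (of_real t) y) = Q x + 2 * Re (B x (sc (of_real t) y)) + Q (sc (of_real t) y)"
    by (rule Q_add)
  also have "Q (sc (of_real t) y) = t^2 * Q y" by (rule Q_scr)
  also have "Re (B x (sc (of_real t) y)) = t * Re (B x y)" by (rule Re_scr)
  finally show ?thesis by simp
qed

end

lemma big_t:
  fixes a b c :: real assumes "a > 0"
  shows "\<exists>T. \<forall>t\<ge>T. c + b * t + a * t^2 > 0"
proof (intro exI allI impI)
  fix t assume t: "t \<ge> (\<bar>b\<bar> + \<bar>c\<bar>) / a + 1"
  have q: "(\<bar>b\<bar> + \<bar>c\<bar>) / a \<ge> 0" using assms by simp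
  have t1: "t \<ge> 1" using t q by linarith
  have h1: "a * t \<ge> \<bar>b\<bar> + \<bar>c\<bar> + a"
  proof -
    have "a * t \<ge> a * ((\<bar>b\<bar> + \<bar>c\<bar>) / a + 1)" using t assms by (intro mult_left_mono) auto
    also have "a * ((\<bar>b\<bar> + \<bar>c\<bar>) / a + 1) = \<bar>b\<bar> + \<bar>c\<bar> + a" using assms by (simp add: field_simps)
    finally show ?thesis .
  qed
  have h2: "t * (a * t) \<ge> t * (\<bar>b\<bar> + \<bar>c\<bar> + a)" using h1 t1 by (intro mult_left_mono) auto
  have h3: "(\<bar>c\<bar> + a) * t \<ge> (\<bar>c\<bar> + a) * 1" using t1 assms by (intro mult_left_mono) auto
  have h4: "(\<bar>b\<bar> + b) * t \<ge> 0" using t1 by simp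
  have e: "t * (\<bar>b\<bar> + \<bar>c\<bar> + a) = \<bar>b\<bar> * t + (\<bar>c\<bar> + a) * t" by (simp add: algebra_simps)
  have "a * t^2 = t * (a * t)" by (simp add: power2_eq_square)
  thus "c + b * t + a * t^2 > 0" using h2 h3 h4 e assms by (simp add: algebra_simps)
qed



lemma quad:
  fixes a b c a' b' c' :: real
  assumes a: "a > 0" and c: "c < 0" and a': "a' > 0"
    and eq: "\<And>t. (a + 2*b*t + c*t^2 > 0) \<longleftrightarrow> (a' + 2*b'*t + c'*t^2 > 0)"
  shows "a*b' = a'*b \<and> a*c' = a'*c"
proof -
  define p1 where "p1 t = a + 2*b*t + c*t^2" for t
  define p2 where "p2 t = a' + 2*b'*t + c'*t^2" for t
  have eqp: "p1 t > 0 \<longleftrightarrow> p2 t > 0" for t unfolding p1_def p2_def by (rule eq)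
  have cont1: "\<forall>x. u \<le> x \<and> x \<le> v \<longrightarrow> isCont p1 x" for u v unfolding p1_def by (intro allI impI continuous_intros)
  have cont2: "\<forall>x. u \<le> x \<and> x \<le> v \<longrightarrow> isCont p2 x" for u v unfolding p2_def by (intro allI impI continuous_intros)
  obtain T1 where T1: "\<forall>t\<ge>T1. (-a) + (-2*b)*t + (-c)*t^2 > 0" using big_t[of "-c" "-a" "-2*b"] c by auto
  obtain T2 where T2: "\<forall>t\<ge>T2. (-a) + (2*b)*t + (-c)*t^2 > 0" using big_t[of "-c" "-a" "2*b"] c by auto
  define T where "T = max 1 (max T1 T2)"
  have T0: "T > 0" unfolding T_def by simp
  have "T \<ge> T1" "T \<ge> T2" unfolding T_def by auto
  hence q1: "(-a) + (-2*b)*T + (-c)*T^2 > 0" and q2: "(-a) + (2*b)*T + (-c)*T^2 > 0"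
    using T1 T2 by auto
  have pT: "p1 T < 0" using q1 unfolding p1_def by (simp add: algebra_simps)
  have pmT: "p1 (-T) < 0" using q2 unfolding p1_def by (simp add: algebra_simps)
  have p10: "p1 0 = a" "p2 0 = a'" unfolding p1_def p2_def by simp_all
  obtain t2 where t2: "0 \<le> t2" "t2 \<le> T" "p1 t2 = 0"
    using IVT2[of p1 T 0 0, OF _ _ _ cont1] pT p10 a T0 by auto
  obtain t1 where t1: "-T \<le> t1" "t1 \<le> 0" "p1 t1 = 0"
    using IVT[of p1 "-T" 0 0, OF _ _ _ cont1] pmT p10 a T0 by auto
  have t1n: "t1 < 0" using t1 p10 a by (cases "t1 = 0") auto
  have t2p: "t2 > 0" using t2 p10 a by (cases "t2 = 0") auto
  have e1: "a + 2*b*t1 + c*t1^2 = 0" "a + 2*b*t2 + c*t2^2 = 0" using t1 t2 unfolding p1_def by auto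
  have "(t1 - t2) * (2*b + c*(t1+t2)) = 0" using e1 by (simp add: algebra_simps power2_eq_square)
  hence bb: "2*b = - c*(t1+t2)" using t1n t2p by auto
  have aa1: "a = -(2*b)*t1 - c*t1^2" using e1(1) by linarith
  have aa: "a = c*t1*t2" unfolding aa1 bb by (simp add: algebra_simps power2_eq_square)
  have fac: "p1 t = c*(t-t1)*(t-t2)" for t
  proof -
    have bt: "(2*b)*t = (- c*(t1+t2))*t" by (simp only: bb)
    have "p1 t = c*t1*t2 + (- c*(t1+t2))*t + c*t^2" unfolding p1_def aa bt[symmetric] by simp
    also have "\<dots> = c*(t-t1)*(t-t2)" by (simp add: algebra_simps power2_eq_square)
    finally show ?thesis .
  qed
  have pos: "p1 t > 0" if "t1 < t" "t < t2" for t
  proof -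
    have "(t-t1)*(t-t2) < 0" using that by (simp add: mult_pos_neg)
    thus ?thesis using fac c by (simp add: mult_neg_neg mult.assoc)
  qed
  have z1: "p2 t1 = 0"
  proof (rule ccontr)
    assume ne: "p2 t1 \<noteq> 0"
    have "\<not> p2 t1 > 0" using eqp[of t1] t1 by simp
    hence neg: "p2 t1 < 0" using ne by simp
    obtain r where r: "t1 \<le> r" "r \<le> 0" "p2 r = 0"
      using IVT[of p2 t1 0 0, OF _ _ _ cont2] neg p10 a' t1 by auto
    have "r \<noteq> t1" using r neg by auto
    hence "p1 r > 0" using pos r t2p by simp
    thus False using eqp[of r] r by simp
  qed
  have z2: "p2 t2 = 0"
  proof (rule ccontr)
    assume ne: "p2 t2 \<noteq> 0"
    have "\<not> p2 t2 > 0" using eqp[of t2] t2 by simp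
    hence neg: "p2 t2 < 0" using ne by simp
    obtain r where r: "0 \<le> r" "r \<le> t2" "p2 r = 0"
      using IVT2[of p2 t2 0 0, OF _ _ _ cont2] neg p10 a' t2 by auto
    have "r \<noteq> t2" using r neg by auto
    hence "p1 r > 0" using pos r t1n by simp
    thus False using eqp[of r] r by simp
  qed
  define BB where "BB = a*b' - a'*b"
  define CC where "CC = a*c' - a'*c"
  have "a * p2 t1 - a' * p1 t1 = 0" using z1 t1 by simp
  hence "t1 * (2*BB + CC*t1) = 0" unfolding p1_def p2_def BB_def CC_def by (simp add: algebra_simps power2_eq_square)
  hence f1: "2*BB + CC*t1 = 0" using t1n by simp
  have "a * p2 t2 - a' * p1 t2 = 0" using z2 t2 by simp
  hence "t2 * (2*BB + CC*t2) = 0" unfolding p1_def p2_def BB_def CC_def by (simp add: algebra_simps power2_eq_square)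
  hence f2: "2*BB + CC*t2 = 0" using t2p by simp
  have "CC * t1 = CC * t2" using f1 f2 by linarith
  hence "CC * (t1 - t2) = 0" by (simp add: right_diff_distrib)
  hence "CC = 0" using t1n t2p by simp
  hence "BB = 0" using f1 by simp
  thus ?thesis using \<open>CC = 0\<close> unfolding BB_def CC_def by simp
qed



locale cset = hsp sc B for sc :: "complex \<Rightarrow> 'a::ab_group_add \<Rightarrow> 'a" and B +
  fixes W :: "'a \<Rightarrow> 'a"
  assumes lin: "linear_on sc (Fpp B) W" and bj: "bij_betw W (Fpp B) (Fpp B)"
    and indef: "indefinite B"
begin

lemma inF: "x \<in> Fpp B \<longleftrightarrow> Q x > 0" by (simp add: Fpp_def)

lemma W_sc: "Q f > 0 \<Longrightarrow> c \<noteq> 0 \<Longrightarrow> W (sc c f) = sc c (W f)"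
  using lin by (simp add: linear_on_def inF)
lemma W_add: "Q f > 0 \<Longrightarrow> Q g > 0 \<Longrightarrow> Q (f + g) > 0 \<Longrightarrow> W (f + g) = W f + W g"
  using lin by (simp add: linear_on_def inF)
lemma W_in: "Q f > 0 \<Longrightarrow> Q (W f) > 0"
  using bj by (auto simp: bij_betw_def inF)
lemma W_inj: "Q f > 0 \<Longrightarrow> Q g > 0 \<Longrightarrow> W f = W g \<Longrightarrow> f = g"
  using bj by (auto simp: bij_betw_def inj_on_def inF)
lemma W_surj: "Q h > 0 \<Longrightarrow> \<exists>f. Q f > 0 \<and> W f = h"
proof -
  assume "Q h > 0"
  hence "h \<in> W ` Fpp B" using bj by (simp add: bij_betw_def inF)
  thus ?thesis by (auto simp: inF)
qed

lemma sc_pos: "Q f > 0 \<Longrightarrow> c \<noteq> 0 \<Longrightarrow> Q (sc c f) > 0"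
  by (simp add: Q_sc)

lemma ex_pos: "\<exists>f. Q f > 0" and ex_neg: "\<exists>g. Q g < 0"
  using indef by (auto simp: indefinite_def)

lemma large: assumes "Q f > 0" shows "\<exists>T. \<forall>t\<ge>T. Q (x + sc (of_real t) f) > 0"
proof -
  obtain T where T: "\<forall>t\<ge>T. Q x + (2 * Re (B x f)) * t + Q f * t^2 > 0"
    using big_t[OF assms] by blast
  show ?thesis
  proof (intro exI allI impI)
    fix t assume "t \<ge> T"
    hence h: "Q x + (2 * Re (B x f)) * t + Q f * t^2 > 0" using T by blast
    have "Q (x + sc (of_real t) f) = Q x + 2 * t * Re (B x f) + t^2 * Q f" by (rule Q_lin)
    also have "\<dots> = Q x + (2 * Re (B x f)) * t + Q f * t^2" by (simp only: mult.commute mult.left_commute)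
    finally show "Q (x + sc (of_real t) f) > 0" using h by simp
  qed
qed

lemma largeneg: assumes "Q f < 0" shows "\<exists>T. \<forall>t\<ge>T. Q (x + sc (of_real t) f) < 0"
proof -
  obtain T where T: "\<forall>t\<ge>T. (- Q x) + (- 2 * Re (B x f)) * t + (- Q f) * t^2 > 0"
    using big_t[of "- Q f" "- Q x" "- 2 * Re (B x f)"] assms by auto
  show ?thesis
  proof (intro exI allI impI)
    fix t assume "t \<ge> T"
    hence h: "(- Q x) + (- 2 * Re (B x f)) * t + (- Q f) * t^2 > 0" using T by blast
    have "Q (x + sc (of_real t) f) = Q x + 2 * t * Re (B x f) + t^2 * Q f" by (rule Q_lin)
    also have "\<dots> = - ((- Q x) + (- 2 * Re (B x f)) * t + (- Q f) * t^2)" by (simp add: algebra_simps)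
    finally show "Q (x + sc (of_real t) f) < 0" using h by simp
  qed
qed

lemma WD:
  assumes f: "Q f > 0" and f': "Q f' > 0" and xf: "Q (x + f) > 0" and xf': "Q (x + f') > 0"
  shows "W (x + f) - W f = W (x + f') - W f'"
proof -
  obtain T1 where T1: "\<forall>t\<ge>T1. Q (x + sc (of_real t) f') > 0" using large[OF f'] by blast
  obtain T2 where T2: "\<forall>t\<ge>T2. Q ((x + f) + sc (of_real t) f') > 0" using large[OF f'] by blast
  define t where "t = max 2 (max T1 T2)"
  have t2: "t \<ge> 2" unfolding t_def by simp
  have h1: "Q (x + sc (of_real t) f') > 0" using T1 unfolding t_def by auto
  have h2: "Q ((x + f) + sc (of_real t) f') > 0" using T2 unfolding t_def by auto
  have tf: "Q (sc (of_real t) f') > 0" using t2 f' by (intro sc_pos) auto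
  have t1f: "Q (sc (of_real (t - 1)) f') > 0" using t2 f' by (intro sc_pos) auto
  have d1: "x + sc (of_real t) f' = (x + f') + sc (of_real (t - 1)) f'"
    by (simp add: scale_left_diff_distrib)
  have pos: "Q ((x + f') + sc (of_real (t - 1)) f') > 0" using h1 unfolding d1 .
  have a1: "W (x + sc (of_real t) f') = W (x + f') + W (sc (of_real (t - 1)) f')"
    unfolding d1 by (rule W_add[OF xf' t1f pos])
  have a2: "W (sc (of_real t) f') = W f' + W (sc (of_real (t - 1)) f')"
  proof -
    have "W (sc (of_real t) f') = sc (of_real t) (W f')" using W_sc f' t2 by simp
    also have "\<dots> = W f' + sc (of_real (t - 1)) (W f')" by (simp add: scale_left_diff_distrib)
    also have "sc (of_real (t - 1)) (W f') = W (sc (of_real (t - 1)) f')" using W_sc f' t2 by simp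
    finally show ?thesis .
  qed
  have b: "W ((x + sc (of_real t) f') + f) = W (x + sc (of_real t) f') + W f"
    using W_add[OF h1 f] h2 by (simp add: algebra_simps)
  have c: "W ((x + f) + sc (of_real t) f') = W (x + f) + W (sc (of_real t) f')"
    using W_add[OF xf tf] h2 by simp
  have "(x + sc (of_real t) f') + f = (x + f) + sc (of_real t) f'" by (simp add: algebra_simps)
  thus ?thesis using a1 a2 b c by (simp add: algebra_simps)
qed

lemma ex_shift: "\<exists>f. Q f > 0 \<and> Q (x + f) > 0"
proof -
  obtain f0 where f0: "Q f0 > 0" using ex_pos by blast
  obtain T where T: "\<forall>t\<ge>T. Q (x + sc (of_real t) f0) > 0" using large[OF f0] by blast
  define t where "t = max 1 T"
  have "Q (sc (of_real t) f0) > 0" using f0 unfolding t_def by (intro sc_pos) auto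
  moreover have "Q (x + sc (of_real t) f0) > 0" using T unfolding t_def by auto
  ultimately show ?thesis by blast
qed

definition Vext where "Vext x = (let f = SOME f. Q f > 0 \<and> Q (x + f) > 0 in W (x + f) - W f)"

lemma K: "Q f > 0 \<Longrightarrow> Q (x + f) > 0 \<Longrightarrow> Vext x = W (x + f) - W f"
proof -
  assume a: "Q f > 0" "Q (x + f) > 0"
  define g where "g = (SOME f. Q f > 0 \<and> Q (x + f) > 0)"
  have g: "Q g > 0 \<and> Q (x + g) > 0" unfolding g_def using ex_shift by (rule someI_ex)
  have "Vext x = W (x + g) - W g" unfolding Vext_def g_def Let_def by simp
  also have "\<dots> = W (x + f) - W f" using WD g a by blast
  finally show ?thesis .
qed

lemma Vext_agree: "Q x > 0 \<Longrightarrow> Vext x = W x"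
proof -
  assume x: "Q x > 0"
  have xx: "Q (x + x) > 0"
    using sc_pos[OF x, of 2] by (simp add: scale_left_distrib[of 1 1, simplified])
  have "Vext x = W (x + x) - W x" using K[OF x xx] .
  also have "\<dots> = W x" using W_add[OF x x xx] by simp
  finally show ?thesis .
qed

lemma Vext_add: "Vext (x + y) = Vext x + Vext y"
proof -
  obtain f where f: "Q f > 0" "Q (x + f) > 0" using ex_shift by blast
  obtain T1 where T1: "\<forall>t\<ge>T1. Q (y + sc (of_real t) f) > 0" using large[OF f(1)] by blast
  obtain T2 where T2: "\<forall>t\<ge>T2. Q ((x + f + y) + sc (of_real t) f) > 0" using large[OF f(1)] by blast
  define t where "t = max 1 (max T1 T2)"
  have t1: "t \<ge> 1" unfolding t_def by simp
  have h1: "Q (y + sc (of_real t) f) > 0" using T1 unfolding t_def by auto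
  have h2: "Q ((x + f + y) + sc (of_real t) f) > 0" using T2 unfolding t_def by auto
  have tf: "Q (sc (of_real t) f) > 0" using t1 f by (intro sc_pos) auto
  have e1: "f + sc (of_real t) f = sc (of_real (t + 1)) f" by (simp add: scale_left_distrib)
  have "t + 1 \<noteq> 0" using t1 by simp
  hence ne: "complex_of_real (t + 1) \<noteq> 0" by (simp only: of_real_eq_0_iff not_False_eq_True)
  have ff: "Q (f + sc (of_real t) f) > 0" unfolding e1 by (rule sc_pos[OF f(1) ne])
  have e2: "(x + y) + (f + sc (of_real t) f) = (x + f + y) + sc (of_real t) f" by (simp add: algebra_simps)
  have "Vext (x + y) = W ((x + y) + (f + sc (of_real t) f)) - W (f + sc (of_real t) f)"
  proof -
    have h2': "Q ((x + y) + (f + sc (of_real t) f)) > 0" using h2 by (simp only: e2)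
    show ?thesis by (rule K[OF ff h2'])
  qed
  also have "W ((x + y) + (f + sc (of_real t) f)) = W (x + f) + W (y + sc (of_real t) f)"
    using W_add[OF f(2) h1] h2 e2 by (simp add: algebra_simps)
  also have "W (f + sc (of_real t) f) = W f + W (sc (of_real t) f)" using W_add[OF f(1) tf ff] .
  finally have eq: "Vext (x + y) = (W (x + f) + W (y + sc (of_real t) f)) - (W f + W (sc (of_real t) f))" .
  show ?thesis unfolding eq K[OF f] K[OF tf h1] by (simp add: algebra_simps)
qed

lemma Vext_sc: "Vext (sc c x) = sc c (Vext x)"
proof (cases "c = 0")
  case True
  obtain f where f: "Q f > 0" using ex_pos by blast
  show ?thesis using K[of f 0] f True by simp
next
  case False
  obtain f where f: "Q f > 0" "Q (x + f) > 0" using ex_shift by blast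
  have "Vext (sc c x) = W (sc c x + sc c f) - W (sc c f)"
    using K[of "sc c f" "sc c x"] sc_pos[OF f(1) False] sc_pos[OF f(2) False]
    by (simp add: scale_right_distrib)
  also have "\<dots> = sc c (W (x + f)) - sc c (W f)"
    using W_sc[OF f(2) False] W_sc[OF f(1) False] by (simp add: scale_right_distrib[symmetric])
  finally show ?thesis using K[OF f] by (simp add: scale_right_diff_distrib)
qed

lemma Vext_linear: "Vector_Spaces.linear sc sc Vext"
  unfolding Vector_Spaces.linear_iff using Vext_add Vext_sc vector_space_axioms by blast

end


context cset begin

lemma uniq:
  assumes "Vector_Spaces.linear sc sc V1" "\<forall>f\<in>Fpp B. V1 f = W f"
    and "Vector_Spaces.linear sc sc V2" "\<forall>f\<in>Fpp B. V2 f = W f"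
  shows "V1 = V2"
proof
  fix x
  interpret L1: Vector_Spaces.linear sc sc V1 by fact
  interpret L2: Vector_Spaces.linear sc sc V2 by fact
  obtain f where f: "Q f > 0" "Q (x + f) > 0" using ex_shift by blast
  have "V1 x = V1 (x + f) - V1 f" by (simp add: L1.add)
  also have "\<dots> = V2 (x + f) - V2 f" using assms f by (simp add: inF)
  also have "\<dots> = V2 x" by (simp add: L2.add)
  finally show "V1 x = V2 x" .
qed

lemma main:
  assumes lV: "Vector_Spaces.linear sc sc V" and agr: "\<forall>f\<in>Fpp B. V f = W f"
  shows "\<exists>\<theta>>0. (\<forall>f. Q f > 0 \<longrightarrow> Q (W f) / Q f = \<theta>) \<and> bij V \<and> (\<forall>f g. B (V f) (V g) = complex_of_real \<theta> * B f g)"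
proof -
  interpret L: Vector_Spaces.linear sc sc V by fact
  have VW: "Q f > 0 \<Longrightarrow> V f = W f" for f using agr by (simp add: inF)
  have inj0: "V y = 0 \<Longrightarrow> y = 0" for y
  proof -
    assume y: "V y = 0"
    obtain f where f: "Q f > 0" "Q (y + f) > 0" using ex_shift by blast
    have "W (y + f) = W f" using VW[OF f(1)] VW[OF f(2)] y by (simp add: L.add)
    hence "y + f = f" using W_inj f by blast
    thus "y = 0" by simp
  qed
  have Vpos: "Q (V x) > 0 \<longleftrightarrow> Q x > 0" for x
  proof
    assume "Q x > 0" thus "Q (V x) > 0" using VW W_in by simp
  next
    assume "Q (V x) > 0"
    then obtain h where h: "Q h > 0" "W h = V x" using W_surj by blast
    have "V (x - h) = 0" using h VW[OF h(1)] by (simp add: L.diff)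
    hence "x = h" using inj0[of "x - h"] by simp
    thus "Q x > 0" using h by simp
  qed
  have core: "Q f * Re (B (V f) (V g)) = Q (V f) * Re (B f g) \<and> Q f * Q (V g) = Q (V f) * Q g"
    if f: "Q f > 0" and g: "Q g < 0" for f g
  proof (rule quad)
    show "Q f > 0" "Q g < 0" by fact+
    show "Q (V f) > 0" using Vpos f by simp
    fix t :: real
    have "Q (V (f + sc (of_real t) g)) > 0 \<longleftrightarrow> Q (f + sc (of_real t) g) > 0" by (rule Vpos)
    moreover have "V (f + sc (of_real t) g) = V f + sc (of_real t) (V g)" by (simp add: L.add L.scale)
    ultimately show "(Q f + 2 * Re (B f g) * t + Q g * t^2 > 0) \<longleftrightarrow>
        (Q (V f) + 2 * Re (B (V f) (V g)) * t + Q (V g) * t^2 > 0)"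
      by (simp add: Q_lin algebra_simps)
  qed
  obtain f0 where f0: "Q f0 > 0" using ex_pos by blast
  obtain g0 where g0: "Q g0 < 0" using ex_neg by blast
  define \<theta> where "\<theta> = Q (V f0) / Q f0"
  have th0: "\<theta> > 0" unfolding \<theta>_def using Vpos f0 by simp
  have ratio_g0: "Q (V g0) / Q g0 = \<theta>"
    using core[OF f0 g0] f0 g0 unfolding \<theta>_def by (simp add: field_simps)
  have ratio: "Q (V f) = \<theta> * Q f" if f: "Q f > 0" for f
  proof -
    have "Q f * Q (V g0) = Q (V f) * Q g0" using core[OF f g0] by simp
    hence "Q (V f) = Q f * (Q (V g0) / Q g0)" using g0 by (simp add: field_simps)
    thus ?thesis using ratio_g0 by simp
  qed
  have beta1: "Re (B (V f) (V g)) = \<theta> * Re (B f g)" if f: "Q f > 0" and g: "Q g < 0" for f g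
  proof -
    have "Q f * Re (B (V f) (V g)) = Q f * (\<theta> * Re (B f g))"
      using core[OF f g] ratio[OF f] by simp
    thus ?thesis using f by simp
  qed
  have beta2: "Re (B (V f) (V y)) = \<theta> * Re (B f y)" if f: "Q f > 0" for f y
  proof -
    obtain T where T: "\<forall>t\<ge>T. Q (y + sc (of_real t) g0) < 0" using largeneg[OF g0] by blast
    define t where "t = max 1 T"
    have h1: "Q (y + sc (of_real t) g0) < 0" using T unfolding t_def by auto
    have "t \<ge> 1" unfolding t_def by simp
    hence "t^2 > 0" by simp
    hence h2: "Q (sc (of_real t) g0) < 0" using g0 by (simp add: Q_scr mult_pos_neg)
    have "Re (B (V f) (V y)) = Re (B (V f) (V (y + sc (of_real t) g0))) - Re (B (V f) (V (sc (of_real t) g0)))"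
      by (simp add: L.add Br_add)
    also have "\<dots> = \<theta> * Re (B f (y + sc (of_real t) g0)) - \<theta> * Re (B f (sc (of_real t) g0))"
      using beta1[OF f h1] beta1[OF f h2] by simp
    also have "\<dots> = \<theta> * Re (B f y)" by (simp add: Br_add algebra_simps)
    finally show ?thesis .
  qed
  have beta: "Re (B (V x) (V y)) = \<theta> * Re (B x y)" for x y
  proof -
    obtain f where f: "Q f > 0" "Q (x + f) > 0" using ex_shift by blast
    have "Re (B (V x) (V y)) = Re (B (V (x + f)) (V y)) - Re (B (V f) (V y))"
      by (simp add: L.add Bl_add)
    also have "\<dots> = \<theta> * Re (B (x + f) y) - \<theta> * Re (B f y)"
      using beta2[OF f(1)] beta2[OF f(2)] by simp
    also have "\<dots> = \<theta> * Re (B x y)" by (simp add: Bl_add algebra_simps)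
    finally show ?thesis .
  qed
  have Bfull: "B (V x) (V y) = complex_of_real \<theta> * B x y" for x y
  proof (rule complex_eqI)
    show "Re (B (V x) (V y)) = Re (complex_of_real \<theta> * B x y)" using beta by simp
    have im: "Im (B u v) = Re (B u (sc (- \<i>) v))" for u v unfolding Br_sc by simp
    have "Im (B (V x) (V y)) = Re (B (V x) (sc (- \<i>) (V y)))" by (rule im)
    also have "sc (- \<i>) (V y) = V (sc (- \<i>) y)" by (rule L.scale[symmetric])
    also have "Re (B (V x) (V (sc (- \<i>) y))) = \<theta> * Re (B x (sc (- \<i>) y))" by (rule beta)
    also have "Re (B x (sc (- \<i>) y)) = Im (B x y)" by (rule im[symmetric])
    finally show "Im (B (V x) (V y)) = Im (complex_of_real \<theta> * B x y)" by simp
  qed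
  have injV: "inj V"
    by (rule injI) (metis L.diff inj0 right_minus_eq)
  have surjV: "surj V"
  proof -
    { fix y
      obtain f where f: "Q f > 0" "Q (y + f) > 0" using ex_shift by blast
      obtain u where u: "Q u > 0" "W u = y + f" using W_surj f(2) by blast
      obtain v where v: "Q v > 0" "W v = f" using W_surj f(1) by blast
      have "V (u - v) = y" using u v VW by (simp add: L.diff)
      hence "y \<in> range V" by blast }
    thus ?thesis by blast
  qed
  show ?thesis
  proof (intro exI conjI allI impI)
    show "\<theta> > 0" by fact
    show "bij V" using injV surjV by (simp add: bij_def)
    show "B (V f) (V g) = complex_of_real \<theta> * B f g" for f g by (rule Bfull)
    show "Q (W f) / Q f = \<theta>" if "Q f > 0" for f using ratio[OF that] VW[OF that] that by simp
  qed
qed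

end


theorem theorem2p3:
  fixes sc :: "complex \<Rightarrow> 'a::ab_group_add \<Rightarrow> 'a"
    and B :: "'a \<Rightarrow> 'a \<Rightarrow> complex"
    and W :: "'a \<Rightarrow> 'a"
  assumes "vector_space sc"
    and "hermitian_sesq sc B"
    and "indefinite B"
    and "nondegenerate B"
    and "linear_on sc (Fpp B) W"
    and "bij_betw W (Fpp B) (Fpp B)"
  shows "(\<exists>!V. Vector_Spaces.linear sc sc V \<and> (\<forall>f\<in>Fpp B. V f = W f))
    \<and> (let \<theta> = Inf ((\<lambda>f. Re (B (W f) (W f)) / Re (B f f)) ` Fpp B) in
         \<theta> > 0 \<and>
         (\<forall>V. Vector_Spaces.linear sc sc V \<and> (\<forall>f\<in>Fpp B. V f = W f) \<longrightarrow>
              bij V \<and> (\<forall>f g. B (V f) (V g) = complex_of_real \<theta> * B f g)))"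
proof -
  interpret cset sc B W
    by (intro cset.intro hsp.intro cset_axioms.intro hsp_axioms.intro assms)
  have agr: "\<forall>f\<in>Fpp B. Vext f = W f" using Vext_agree by (simp add: inF)
  have ex1: "\<exists>!V. Vector_Spaces.linear sc sc V \<and> (\<forall>f\<in>Fpp B. V f = W f)"
    using Vext_linear agr uniq by blast
  obtain \<theta> where th: "\<theta> > 0" "\<forall>f. Q f > 0 \<longrightarrow> Q (W f) / Q f = \<theta>"
    using main[OF Vext_linear agr] by blast
  obtain f0 where f0: "Q f0 > 0" using ex_pos by blast
  have img: "(\<lambda>f. Re (B (W f) (W f)) / Re (B f f)) ` Fpp B = {\<theta>}"
    using th f0 by (auto simp: inF)
  have "Inf ((\<lambda>f. Re (B (W f) (W f)) / Re (B f f)) ` Fpp B) = \<theta>" unfolding img by simp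
  moreover have "\<forall>V. Vector_Spaces.linear sc sc V \<and> (\<forall>f\<in>Fpp B. V f = W f) \<longrightarrow>
              bij V \<and> (\<forall>f g. B (V f) (V g) = complex_of_real \<theta> * B f g)"
  proof (intro allI impI)
    fix V assume V: "Vector_Spaces.linear sc sc V \<and> (\<forall>f\<in>Fpp B. V f = W f)"
    obtain \<theta>' where th': "\<theta>' > 0" "\<forall>f. Q f > 0 \<longrightarrow> Q (W f) / Q f = \<theta>'"
      "bij V" "\<forall>f g. B (V f) (V g) = complex_of_real \<theta>' * B f g"
      using main V by blast
    have "\<theta>' = \<theta>" using th th' f0 by metis
    thus "bij V \<and> (\<forall>f g. B (V f) (V g) = complex_of_real \<theta> * B f g)" using th' by simp
  qed
  ultimately show ?thesis using ex1 th by (simp add: Let_def)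
qed

end
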